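(* Let $a>0$ be a constant and consider the (3+1)-dimensional Zakharov–Kuznetsov equation $$u_t + a\,u\,u_x + u_{xx} + u_{yy} + u_{zz} = 0$$ for $u=u(x,y,z,t)$. The infinitesimal generators $\xi_x\partial_x+\xi_y\partial_y+\xi_z\partial_z+\xi_t\partial_t+\xi_u\partial_u$ of the one-parameter Lie groups of point transformations $(x,y,z,t,u)\mapsto(\hat x,\hat y,\hat z,\hat t,\hat u)$ leaving this equation invariant are exactly those with $$\xi_x=\tfrac{c_1x}{2}+c_5t+c_6,\quad \xi_y=\tfrac{c_1y}{2}+c_3z+c_4,\quad \xi_z=-c_3y+\tfrac{c_1z}{2}+c_7,\quad \xi_t=c_1t+c_2,\quad \xi_u=-\tfrac{c_1u}{2}+\tfrac{c_5}{a},$$ where $c_1,\dots,c_7$ are arbitrary real constants. Equivalently, the Lie algebra of point symmetries is spanned by $\mathfrak{D}_1=\frac{x}{2}\partial_x+\frac{y}{2}\partial_y+\frac{z}{2}\partial_z+t\partial_t-\frac{u}{2}\partial_u$, $\mathfrak{D}_2=\partial_t$, $\mathfrak{D}_3=z\partial_y-y\partial_z$, $\mathfrak{D}_4=\partial_y$, $\mathfrak{D}_5=t\partial_x+\frac{1}{a}\partial_u$, $\mathfrak{D}_6=\partial_x$, $\mathfrak{D}_7=\partial_z$.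
   Context: A vector field $\mathbb{Z}$ on the space of variables $(x,y,z,t,u)$ is an infinitesimal (point) symmetry of the equation $\Delta:=u_t+auu_x+u_{xx}+u_{yy}+u_{zz}=0$ if its second prolongation $\mathrm{Pr}^{(2)}\mathbb{Z}$ satisfies $\mathrm{Pr}^{(2)}\mathbb{Z}(\Delta)=0$ whenever $\Delta=0$. *)

theory Defs
  imports "HOL-Analysis.Analysis"
begin

text \<open>Independent variables (x,y,z,t) are a point of real^4,
 with indices 0 = x, 1 = y, 2 = z, 3 = t; the dependent variable u is a real.
 A vector field  Z = sum_i xi i d/dx_i + phi d/du  is given by coefficient
 functions  xi :: 4 => real^4 => real => real  and  phi :: real^4 => real => real.
 Second-order jet coordinates: u1 i = u_{x_i}, u2 i j = u_{x_i x_j} (symmetric).\<close>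

type_synonym coeff = "real^4 \<Rightarrow> real \<Rightarrow> real"

definition dx :: "4 \<Rightarrow> coeff \<Rightarrow> coeff" where
  "dx i f x u = deriv (\<lambda>s. f (x + s *\<^sub>R axis i 1) u) 0"

definition du :: "coeff \<Rightarrow> coeff" where
  "du f x u = deriv (\<lambda>s. f x (u + s)) 0"

datatype direction = DX "4" | DU

fun pd :: "direction \<Rightarrow> coeff \<Rightarrow> coeff" where
  "pd (DX i) f = dx i f"
| "pd DU f = du f"

fun pd_exists :: "direction \<Rightarrow> coeff \<Rightarrow> real^4 \<Rightarrow> real \<Rightarrow> bool" where
  "pd_exists (DX i) f x u = ((\<lambda>s. f (x + s *\<^sub>R axis i 1) u) differentiable (at 0))"
| "pd_exists DU f x u = ((\<lambda>s. f x (u + s)) differentiable (at 0))"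

fun Ck :: "nat \<Rightarrow> coeff \<Rightarrow> bool" where
  "Ck 0 f = continuous_on UNIV (\<lambda>p. f (fst p) (snd p))"
| "Ck (Suc k) f = (continuous_on UNIV (\<lambda>p. f (fst p) (snd p))
      \<and> (\<forall>d x u. pd_exists d f x u) \<and> (\<forall>d. Ck k (pd d f)))"

definition smooth_coeff :: "coeff \<Rightarrow> bool" where
  "smooth_coeff f = (\<forall>k. Ck k f)"

definition TD1 :: "4 \<Rightarrow> coeff \<Rightarrow> real^4 \<Rightarrow> real \<Rightarrow> (4 \<Rightarrow> real) \<Rightarrow> real" where
  "TD1 j F x u u1 = dx j F x u + du F x u * u1 j"

definition TD2 :: "4 \<Rightarrow> 4 \<Rightarrow> coeff \<Rightarrow> real^4 \<Rightarrow> real \<Rightarrow> (4 \<Rightarrow> real) \<Rightarrow> (4 \<Rightarrow> 4 \<Rightarrow> real) \<Rightarrow> real" where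
  "TD2 i j F x u u1 u2 =
     dx j (dx i F) x u + du (dx i F) x u * u1 j + dx j (du F) x u * u1 i
     + du (du F) x u * u1 i * u1 j + du F x u * u2 i j"

definition phi1 :: "(4 \<Rightarrow> coeff) \<Rightarrow> coeff \<Rightarrow> 4 \<Rightarrow> real^4 \<Rightarrow> real \<Rightarrow> (4 \<Rightarrow> real) \<Rightarrow> real" where
  "phi1 \<xi> \<phi> i x u u1 = TD1 i \<phi> x u u1 - (\<Sum>k\<in>UNIV. TD1 i (\<xi> k) x u u1 * u1 k)"

definition phi2 :: "(4 \<Rightarrow> coeff) \<Rightarrow> coeff \<Rightarrow> 4 \<Rightarrow> 4 \<Rightarrow> real^4 \<Rightarrow> real \<Rightarrow> (4 \<Rightarrow> real) \<Rightarrow> (4 \<Rightarrow> 4 \<Rightarrow> real) \<Rightarrow> real" where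
  "phi2 \<xi> \<phi> i j x u u1 u2 =
     TD2 i j \<phi> x u u1 u2
     - (\<Sum>k\<in>UNIV. TD2 i j (\<xi> k) x u u1 u2 * u1 k + TD1 i (\<xi> k) x u u1 * u2 k j
                   + TD1 j (\<xi> k) x u u1 * u2 i k)"

definition zk_delta :: "real \<Rightarrow> real \<Rightarrow> (4 \<Rightarrow> real) \<Rightarrow> (4 \<Rightarrow> 4 \<Rightarrow> real) \<Rightarrow> real" where
  "zk_delta a u u1 u2 = u1 3 + a * u * u1 0 + u2 0 0 + u2 1 1 + u2 2 2"

text \<open>Pr^(2) Z applied to Delta (Delta has no explicit x,y,z,t dependence, so the xi-terms vanish):
  phi^t + a phi u_x + a u phi^x + phi^{xx} + phi^{yy} + phi^{zz}.\<close>
definition pr2_zk :: "real \<Rightarrow> (4 \<Rightarrow> coeff) \<Rightarrow> coeff \<Rightarrow> real^4 \<Rightarrow> real \<Rightarrow> (4 \<Rightarrow> real) \<Rightarrow> (4 \<Rightarrow> 4 \<Rightarrow> real) \<Rightarrow> real" where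
  "pr2_zk a \<xi> \<phi> x u u1 u2 =
     phi1 \<xi> \<phi> 3 x u u1 + a * \<phi> x u * u1 0 + a * u * phi1 \<xi> \<phi> 0 x u u1
     + phi2 \<xi> \<phi> 0 0 x u u1 u2 + phi2 \<xi> \<phi> 1 1 x u u1 u2 + phi2 \<xi> \<phi> 2 2 x u u1 u2"

definition is_zk_symmetry :: "real \<Rightarrow> (4 \<Rightarrow> coeff) \<Rightarrow> coeff \<Rightarrow> bool" where
  "is_zk_symmetry a \<xi> \<phi> =
     (\<forall>x u u1 u2. (\<forall>i j. u2 i j = u2 j i) \<longrightarrow> zk_delta a u u1 u2 = 0
        \<longrightarrow> pr2_zk a \<xi> \<phi> x u u1 u2 = 0)"

end

theory Submission
  imports Defs
begin


abbreviation ax :: "4 \<Rightarrow> real^4" where "ax i \<equiv> axis i (1::real)"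

lemma four0: "(4::4) = 0" by simp
lemma sum4: "sum f (UNIV::4 set) = f 0 + f 1 + f 2 + f 3"
  unfolding sum_4 four0 by (simp add: ac_simps)

lemma smooth_pd: "smooth_coeff f \<Longrightarrow> smooth_coeff (pd d f)"
  unfolding smooth_coeff_def
proof
  fix k assume "\<forall>k. Ck k f" then have "Ck (Suc k) f" by blast
  then show "Ck k (pd d f)" by simp
qed

lemma smooth_ex: "smooth_coeff f \<Longrightarrow> pd_exists d f x u"
  unfolding smooth_coeff_def by (metis Ck.simps(2))

lemma smooth_dx: "smooth_coeff f \<Longrightarrow> smooth_coeff (dx i f)"
  using smooth_pd[of f "DX i"] by simp
lemma smooth_du: "smooth_coeff f \<Longrightarrow> smooth_coeff (du f)"
  using smooth_pd[of f "DU"] by simp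
lemma smooth_exx: "smooth_coeff f \<Longrightarrow> (\<lambda>s. f (x + s *\<^sub>R ax i) u) differentiable (at 0)"
  using smooth_ex[of f "DX i" x u] by simp
lemma smooth_exu: "smooth_coeff f \<Longrightarrow> (\<lambda>s. f x (u + s)) differentiable (at 0)"
  using smooth_ex[of f "DU" x u] by simp

lemma hasderiv_x:
  assumes "\<And>y. (\<lambda>s. F (y + s *\<^sub>R ax i) u) differentiable (at 0)"
  shows "((\<lambda>s. F (x + s *\<^sub>R ax i) u) has_real_derivative dx i F (x + s0 *\<^sub>R ax i) u) (at s0)"
proof -
  have "((\<lambda>s. F ((x + s0 *\<^sub>R ax i) + s *\<^sub>R ax i) u) has_real_derivative dx i F (x + s0 *\<^sub>R ax i) u) (at 0)"
    using assms[of "x + s0 *\<^sub>R ax i"] unfolding dx_def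
    using DERIV_deriv_iff_real_differentiable by blast
  moreover have "(\<lambda>s. F ((x + s0 *\<^sub>R ax i) + s *\<^sub>R ax i) u) = (\<lambda>s. (\<lambda>s. F (x + s *\<^sub>R ax i) u) (s + s0))"
    by (rule ext) (simp add: scaleR_add_left algebra_simps)
  ultimately show ?thesis using DERIV_shift[of "\<lambda>s. F (x + s *\<^sub>R ax i) u" _ 0 s0] by simp
qed

lemma hasderiv_u:
  assumes "\<And>v. (\<lambda>s. F x (v + s)) differentiable (at 0)"
  shows "((\<lambda>s. F x (u + s)) has_real_derivative du F x (u + s0)) (at s0)"
proof -
  have "((\<lambda>s. F x ((u + s0) + s)) has_real_derivative du F x (u + s0)) (at 0)"
    using assms[of "u + s0"] unfolding du_def
    using DERIV_deriv_iff_real_differentiable by blast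
  moreover have "(\<lambda>s. F x ((u + s0) + s)) = (\<lambda>s. (\<lambda>s. F x (u + s)) (s + s0))"
    by (rule ext) (simp add: algebra_simps)
  ultimately show ?thesis using DERIV_shift[of "\<lambda>s. F x (u + s)" _ 0 s0] by simp
qed

lemma integ:
  fixes g :: "real \<Rightarrow> real"
  assumes "\<And>s. (g has_real_derivative c) (at s)"
  shows "g s = g 0 + c * s"
proof (cases "s = 0")
  case True then show ?thesis by simp
next
  case False
  have "g s - g 0 = (s - 0) * c" by (rule DERIV_const_ratio_const) (use False assms in auto)
  then show ?thesis by (simp add: algebra_simps)
qed

definition invx :: "4 \<Rightarrow> coeff \<Rightarrow> bool" where
  "invx i F = (\<forall>y u s. F (y + s *\<^sub>R ax i) u = F y u)"
definition invu :: "coeff \<Rightarrow> bool" where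
  "invu F = (\<forall>y u s. F y (u + s) = F y u)"

lemma invx_dx: "invx i F \<Longrightarrow> invx i (dx j F)"
  unfolding invx_def dx_def
proof (intro allI)
  fix y u s assume H: "\<forall>y u s. F (y + s *\<^sub>R ax i) u = F y u"
  have "(\<lambda>r. F (y + s *\<^sub>R ax i + r *\<^sub>R ax j) u) = (\<lambda>r. F (y + r *\<^sub>R ax j) u)"
  proof
    fix r show "F (y + s *\<^sub>R ax i + r *\<^sub>R ax j) u = F (y + r *\<^sub>R ax j) u"
    proof -
      have "F ((y + r *\<^sub>R ax j) + s *\<^sub>R ax i) u = F (y + r *\<^sub>R ax j) u" using H by blast
      then show ?thesis by (simp add: algebra_simps)
    qed
  qed
  then show "deriv (\<lambda>r. F (y + s *\<^sub>R ax i + r *\<^sub>R ax j) u) 0 = deriv (\<lambda>r. F (y + r *\<^sub>R ax j) u) 0" by simp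
qed

lemma invx_du: "invx i F \<Longrightarrow> invx i (du F)"
  unfolding invx_def du_def by simp

lemma invu_dx: "invu F \<Longrightarrow> invu (dx j F)"
  unfolding invu_def dx_def by simp

lemma invu_du: "invu F \<Longrightarrow> invu (du F)"
  unfolding invu_def du_def
proof (intro allI)
  fix y u s assume H: "\<forall>y u s. F y (u + s) = F y u"
  have "(\<lambda>r. F y (u + s + r)) = (\<lambda>r. F y (u + r))"
  proof
    fix r show "F y (u + s + r) = F y (u + r)"
      using H[rule_format, of y "u + r" s] by (simp add: algebra_simps)
  qed
  then show "deriv (\<lambda>r. F y (u + s + r)) 0 = deriv (\<lambda>r. F y (u + r)) 0" by simp
qed

lemma invx_zero: "invx i F \<Longrightarrow> dx i F y u = 0"
  unfolding invx_def dx_def by simp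

lemma invu_zero: "invu F \<Longrightarrow> du F y u = 0"
  unfolding invu_def du_def by simp

definition dxok :: "4 \<Rightarrow> coeff \<Rightarrow> bool" where
  "dxok i F = (\<forall>y u. (\<lambda>s. F (y + s *\<^sub>R ax i) u) differentiable (at 0))"

lemma smooth_dxok: "smooth_coeff F \<Longrightarrow> dxok i F"
  unfolding dxok_def using smooth_exx by blast

lemma dxok0: "dxok i F \<Longrightarrow> dxok i (\<lambda>y u. F y 0)"
  unfolding dxok_def by blast

lemma lin_x:
  assumes "dxok i F" "\<And>y u. dx i F y u = G y u" "invx i G"
  shows "F (y + s *\<^sub>R ax i) u = F y u + s * G y u"
proof -
  have "\<And>s0. ((\<lambda>s. F (y + s *\<^sub>R ax i) u) has_real_derivative G y u) (at s0)"
    using hasderiv_x[of F i u y] assms(1)[unfolded dxok_def] assms(2,3) unfolding invx_def by metis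
  from integ[OF this, of s] show ?thesis by (simp add: algebra_simps)
qed

lemma zero_invx:
  assumes "dxok i F" "\<And>y u. dx i F y u = 0"
  shows "invx i F"
  unfolding invx_def using lin_x[OF assms(1), where G="\<lambda>_ _. 0"] assms(2) by (simp add: invx_def)

lemma lin_u:
  assumes "smooth_coeff F" "\<And>y u. du F y u = G y u" "invu G"
  shows "F y u = F y 0 + u * G y 0"
proof -
  have "\<And>s0. ((\<lambda>s. F y (0 + s)) has_real_derivative G y 0) (at s0)"
    using hasderiv_u[of F y 0] smooth_exu[OF assms(1)] assms(2,3) unfolding invu_def
    by (metis add_0)
  from integ[OF this, of u] show ?thesis by (simp add: algebra_simps)
qed

lemma zero_invu:
  assumes "smooth_coeff F" "\<And>y u. du F y u = 0"
  shows "invu F"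
  unfolding invu_def
proof (intro allI)
  fix y u s
  have "\<And>v. F y v = F y 0" using lin_u[OF assms(1), of "\<lambda>_ _. 0"] assms(2) by (simp add: invu_def)
  then show "F y (u + s) = F y u" by metis
qed

lemma cross:
  assumes "dxok i F" "dxok j F" "\<And>y u. dx i F y u = G y u" "invx i G" "invx j G"
  shows "invx i (dx j F)"
  unfolding invx_def
proof (intro allI)
  fix y u s
  have e: "(\<lambda>r. F (y + s *\<^sub>R ax i + r *\<^sub>R ax j) u) = (\<lambda>r. F (y + r *\<^sub>R ax j) u + s * G y u)"
  proof
    fix r
    have "F (y + s *\<^sub>R ax i + r *\<^sub>R ax j) u = F ((y + r *\<^sub>R ax j) + s *\<^sub>R ax i) u"
      by (simp add: algebra_simps)
    also have "\<dots> = F (y + r *\<^sub>R ax j) u + s * G (y + r *\<^sub>R ax j) u"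
      by (rule lin_x[OF assms(1,3,4)])
    also have "G (y + r *\<^sub>R ax j) u = G y u" using assms(5) unfolding invx_def by blast
    finally show "F (y + s *\<^sub>R ax i + r *\<^sub>R ax j) u = F (y + r *\<^sub>R ax j) u + s * G y u" .
  qed
  have "((\<lambda>r. F (y + r *\<^sub>R ax j) u + s * G y u) has_real_derivative dx j F y u) (at 0)"
  proof -
    have "((\<lambda>r. F (y + r *\<^sub>R ax j) u) has_real_derivative dx j F y u) (at 0)"
      using assms(2)[unfolded dxok_def] unfolding dx_def
      by (simp add: DERIV_deriv_iff_real_differentiable)
    from DERIV_add[OF this DERIV_const[of "s * G y u"]] show ?thesis by simp
  qed
  then have "deriv (\<lambda>r. F (y + r *\<^sub>R ax j) u + s * G y u) 0 = dx j F y u"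
    by (rule DERIV_imp_deriv)
  then show "dx j F (y + s *\<^sub>R ax i) u = dx j F y u"
    unfolding dx_def[of j F "y + s *\<^sub>R ax i"] by (simp add: e)
qed

lemma invu_at0: "invu F \<Longrightarrow> F y u = F y 0"
  unfolding invu_def by (metis add_0)

lemma linF:
  assumes "smooth_coeff F" "smooth_coeff H" "\<And>y u. F y u = F y 0 + u * H y 0"
  shows "dx j F y u = dx j F y 0 + u * dx j H y 0"
proof -
  have e: "(\<lambda>s. F (y + s *\<^sub>R ax j) u) = (\<lambda>s. F (y + s *\<^sub>R ax j) 0 + u * H (y + s *\<^sub>R ax j) 0)"
    by (rule ext) (rule assms(3))
  have d1: "((\<lambda>s. F (y + s *\<^sub>R ax j) 0) has_real_derivative dx j F y 0) (at 0)"
    using smooth_exx[OF assms(1), of y j 0] unfolding dx_def by (simp add: DERIV_deriv_iff_real_differentiable)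
  have d2: "((\<lambda>s. H (y + s *\<^sub>R ax j) 0) has_real_derivative dx j H y 0) (at 0)"
    using smooth_exx[OF assms(2), of y j 0] unfolding dx_def by (simp add: DERIV_deriv_iff_real_differentiable)
  have "((\<lambda>s. F (y + s *\<^sub>R ax j) 0 + u * H (y + s *\<^sub>R ax j) 0) has_real_derivative dx j F y 0 + u * dx j H y 0) (at 0)"
    by (intro DERIV_add DERIV_cmult d1 d2)
  then show ?thesis unfolding dx_def[of j F y u] e by (rule DERIV_imp_deriv)
qed

lemma linF_u:
  assumes "\<And>y u. F y u = F y 0 + u * H y 0"
  shows "du F y u = H y 0"
proof -
  have e: "(\<lambda>s. F y (u + s)) = (\<lambda>s. F y 0 + (u + s) * H y 0)"
    by (rule ext) (rule assms)
  have "((\<lambda>s. F y 0 + (u + s) * H y 0) has_real_derivative H y 0) (at 0)"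
    by (auto intro!: derivative_eq_intros)
  then show ?thesis unfolding du_def e by (rule DERIV_imp_deriv)
qed

lemma forall4: "(\<forall>i::4. P i) \<longleftrightarrow> P 0 \<and> P 1 \<and> P 2 \<and> P 3"
  using forall_4[of P] four0 by auto

lemma decomp: "(y::real^4) = 0 + y$0 *\<^sub>R ax 0 + y$1 *\<^sub>R ax 1 + y$2 *\<^sub>R ax 2 + y$3 *\<^sub>R ax 3"
  by (simp add: vec_eq_iff forall4 axis_def)

lemma affine:
  assumes "\<And>i y u s. F (y + s *\<^sub>R ax i) u = F y u + s * c i" "invu F"
  shows "F y u = F 0 0 + c 0 * y$0 + c 1 * y$1 + c 2 * y$2 + c 3 * y$3"
proof -
  have "F y u = F (0 + y$0 *\<^sub>R ax 0 + y$1 *\<^sub>R ax 1 + y$2 *\<^sub>R ax 2 + y$3 *\<^sub>R ax 3) u"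
    using decomp[of y] by simp
  also have "\<dots> = F 0 u + c 0 * y$0 + c 1 * y$1 + c 2 * y$2 + c 3 * y$3"
    by (simp only: assms(1)) (simp add: algebra_simps)
  also have "F 0 u = F 0 0" by (rule invu_at0[OF assms(2)])
  finally show ?thesis .
qed

lemma affine2:
  assumes "\<And>i. dxok i F" "\<And>i y u. dx i F y u = c i" "invu F"
  shows "F y u = F 0 0 + c 0 * y$0 + c 1 * y$1 + c 2 * y$2 + c 3 * y$3"
proof (rule affine[OF _ assms(3)])
  fix i y u s
  show "F (y + s *\<^sub>R ax i) u = F y u + s * c i"
    using lin_x[OF assms(1), where G="\<lambda>_ _. c i"] assms(2) by (simp add: invx_def)
qed

lemma constF:
  assumes "\<And>i. invx i F" "invu F"
  shows "F y u = F 0 0"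
  using affine[of F "\<lambda>_. 0"] assms unfolding invx_def by simp

lemma dx_const: "dx i (\<lambda>_ _. c) y u = 0"
  by (simp add: dx_def)

lemma dx_at0: "dx j (\<lambda>y u. F y 0) = (\<lambda>y u. dx j F y 0)"
  by (simp add: dx_def fun_eq_iff)

lemma invx_cong: "(\<And>y u. F y u = c * H y u) \<Longrightarrow> invx i H \<Longrightarrow> invx i F"
  unfolding invx_def by simp


definition U2 :: "(4 \<Rightarrow> 4 \<Rightarrow> real) \<Rightarrow> 4 \<Rightarrow> 4 \<Rightarrow> real" where "U2 Q = (\<lambda>i j. Q i j + Q j i)"
definition U1 :: "real \<Rightarrow> real \<Rightarrow> (4 \<Rightarrow> real) \<Rightarrow> (4 \<Rightarrow> 4 \<Rightarrow> real) \<Rightarrow> 4 \<Rightarrow> real" where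
  "U1 a u P Q = (\<lambda>i. if i = 3 then -(a*u*P 0 + U2 Q 0 0 + U2 Q 1 1 + U2 Q 2 2) else P i)"
definition GG where "GG a \<xi> \<phi> x u P Q = pr2_zk a \<xi> \<phi> x u (U1 a u P Q) (U2 Q)"
definition dd :: "4 \<Rightarrow> 4 \<Rightarrow> 4 \<Rightarrow> 4 \<Rightarrow> real" where "dd i j = (\<lambda>a b. if a = i \<and> b = j then 1 else 0)"
definition dv :: "4 \<Rightarrow> real \<Rightarrow> 4 \<Rightarrow> real" where "dv i c = (\<lambda>a. if a = i then c else 0)"
lemmas exps = GG_def pr2_zk_def phi1_def phi2_def TD1_def TD2_def sum4 U1_def U2_def dd_def dv_def

lemma symE: "is_zk_symmetry a \<xi> \<phi> \<Longrightarrow> GG a \<xi> \<phi> x u P Q = 0"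
  unfolding is_zk_symmetry_def zk_delta_def GG_def by (auto simp: U1_def U2_def)

locale zk =
  fixes a :: real and \<xi> :: "4 \<Rightarrow> coeff" and \<phi> :: coeff
  assumes apos: "a > 0" and sx: "\<And>i. smooth_coeff (\<xi> i)" and sp: "smooth_coeff \<phi>"
    and sym: "is_zk_symmetry a \<xi> \<phi>"
begin

lemma G0: "GG a \<xi> \<phi> x u P Q = 0" by (rule symE[OF sym])

lemma s1_T0: "dx 0 (\<xi> 3) x u = 0"
  using G0[of x u "\<lambda>_. 0" "\<lambda>_ _. 0"] G0[of x u "\<lambda>_. 0" "dd 0 3"] by (simp add: exps)
lemma s1_T1: "dx 1 (\<xi> 3) x u = 0"
  using G0[of x u "\<lambda>_. 0" "\<lambda>_ _. 0"] G0[of x u "\<lambda>_. 0" "dd 1 3"] by (simp add: exps)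
lemma s1_T2: "dx 2 (\<xi> 3) x u = 0"
  using G0[of x u "\<lambda>_. 0" "\<lambda>_ _. 0"] G0[of x u "\<lambda>_. 0" "dd 2 3"] by (simp add: exps)
lemma s1_Tu: "du (\<xi> 3) x u = 0"
  using G0[of x u "\<lambda>_. 0" "\<lambda>_ _. 0"] G0[of x u "\<lambda>_. 0" "dd 1 3"]
    G0[of x u "dv 1 1" "\<lambda>_ _. 0"] G0[of x u "dv 1 1" "dd 1 3"] by (simp add: exps)
lemma s1_X0u: "du (\<xi> 0) x u = 0"
  using G0[of x u "\<lambda>_. 0" "\<lambda>_ _. 0"] G0[of x u "\<lambda>_. 0" "dd 0 1"]
    G0[of x u "dv 1 1" "\<lambda>_ _. 0"] G0[of x u "dv 1 1" "dd 0 1"] by (simp add: exps)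
lemma s1_X1u: "du (\<xi> 1) x u = 0"
  using G0[of x u "\<lambda>_. 0" "\<lambda>_ _. 0"] G0[of x u "\<lambda>_. 0" "dd 1 2"]
    G0[of x u "dv 2 1" "\<lambda>_ _. 0"] G0[of x u "dv 2 1" "dd 1 2"] by (simp add: exps)
lemma s1_X2u: "du (\<xi> 2) x u = 0"
  using G0[of x u "\<lambda>_. 0" "\<lambda>_ _. 0"] G0[of x u "\<lambda>_. 0" "dd 1 2"]
    G0[of x u "dv 1 1" "\<lambda>_ _. 0"] G0[of x u "dv 1 1" "dd 1 2"] by (simp add: exps)
lemma s1_K01: "dx 1 (\<xi> 0) x u + dx 0 (\<xi> 1) x u = 0"
  using G0[of x u "\<lambda>_. 0" "\<lambda>_ _. 0"] G0[of x u "\<lambda>_. 0" "dd 0 1"] by (simp add: exps)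
lemma s1_K02: "dx 2 (\<xi> 0) x u + dx 0 (\<xi> 2) x u = 0"
  using G0[of x u "\<lambda>_. 0" "\<lambda>_ _. 0"] G0[of x u "\<lambda>_. 0" "dd 0 2"] by (simp add: exps)
lemma s1_K12: "dx 2 (\<xi> 1) x u + dx 1 (\<xi> 2) x u = 0"
  using G0[of x u "\<lambda>_. 0" "\<lambda>_ _. 0"] G0[of x u "\<lambda>_. 0" "dd 1 2"] by (simp add: exps)

lemma k4: "(k::4) = 0 \<or> k = 1 \<or> k = 2 \<or> k = 3"
  using exhaust_4[of k] four0 by auto

lemma Xu: "du (\<xi> k) x u = 0"
  using k4[of k] s1_X0u s1_X1u s1_X2u s1_Tu by auto
lemma inv_u: "invu (\<xi> k)" by (rule zero_invu[OF sx Xu])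
lemma invx_T0: "invx 0 (\<xi> 3)" by (rule zero_invx[OF smooth_dxok[OF sx] s1_T0])
lemma invx_T1: "invx 1 (\<xi> 3)" by (rule zero_invx[OF smooth_dxok[OF sx] s1_T1])
lemma invx_T2: "invx 2 (\<xi> 3)" by (rule zero_invx[OF smooth_dxok[OF sx] s1_T2])
lemma Z_uu: "du (du (\<xi> k)) x u = 0" by (rule invu_zero[OF invu_du[OF inv_u]])
lemma Z_ux: "du (dx i (\<xi> k)) x u = 0" by (rule invu_zero[OF invu_dx[OF inv_u]])
lemma Z_xu: "dx i (du (\<xi> k)) x u = 0"
proof -
  have "du (\<xi> k) = (\<lambda>_ _. 0)" by (intro ext) (rule Xu)
  then show ?thesis by (simp add: dx_def)
qed
lemma Z_Txx: "dx 0 (dx 0 (\<xi> 3)) x u = 0" "dx 1 (dx 1 (\<xi> 3)) x u = 0" "dx 2 (dx 2 (\<xi> 3)) x u = 0"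
  by (rule invx_zero[OF invx_dx[OF invx_T0]] invx_zero[OF invx_dx[OF invx_T1]] invx_zero[OF invx_dx[OF invx_T2]])+

lemmas Zs = Xu Z_uu Z_ux Z_xu Z_Txx s1_T0 s1_T1 s1_T2

lemma e_uu: "du (du \<phi>) x u = 0"
  using G0[of x u "dv 1 1" "\<lambda>_ _. 0"] G0[of x u "dv 1 (-1)" "\<lambda>_ _. 0"] G0[of x u "\<lambda>_. 0" "\<lambda>_ _. 0"]
  by (simp add: exps Zs) (simp add: algebra_simps; linarith)

lemma e_diag0: "2 * dx 0 (\<xi> 0) x u = dx 3 (\<xi> 3) x u"
  using G0[of x u "\<lambda>_. 0" "dd 0 0"] G0[of x u "\<lambda>_. 0" "\<lambda>_ _. 0"]
  by (simp add: exps Zs)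
lemma e_diag1: "2 * dx 1 (\<xi> 1) x u = dx 3 (\<xi> 3) x u"
  using G0[of x u "\<lambda>_. 0" "dd 1 1"] G0[of x u "\<lambda>_. 0" "\<lambda>_ _. 0"]
  by (simp add: exps Zs)
lemma e_diag2: "2 * dx 2 (\<xi> 2) x u = dx 3 (\<xi> 3) x u"
  using G0[of x u "\<lambda>_. 0" "dd 2 2"] G0[of x u "\<lambda>_. 0" "\<lambda>_ _. 0"]
  by (simp add: exps Zs)

lemma e_const: "dx 3 \<phi> x u + a * u * dx 0 \<phi> x u + dx 0 (dx 0 \<phi>) x u + dx 1 (dx 1 \<phi>) x u + dx 2 (dx 2 \<phi>) x u = 0"
  using G0[of x u "\<lambda>_. 0" "\<lambda>_ _. 0"]
  by (simp add: exps Zs)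

lemma e_lin0: "a * u * dx 3 (\<xi> 3) x u - dx 3 (\<xi> 0) x u + a * \<phi> x u - a * u * dx 0 (\<xi> 0) x u
   + du (dx 0 \<phi>) x u + dx 0 (du \<phi>) x u
   - (dx 0 (dx 0 (\<xi> 0)) x u + dx 1 (dx 1 (\<xi> 0)) x u + dx 2 (dx 2 (\<xi> 0)) x u) = 0"
  using G0[of x u "dv 0 1" "\<lambda>_ _. 0"] G0[of x u "\<lambda>_. 0" "\<lambda>_ _. 0"] e_uu[of x u]
  by (simp add: exps Zs) (simp add: algebra_simps; linarith)

lemma e_lin1: "- dx 3 (\<xi> 1) x u - a * u * dx 0 (\<xi> 1) x u
   + du (dx 1 \<phi>) x u + dx 1 (du \<phi>) x u
   - (dx 0 (dx 0 (\<xi> 1)) x u + dx 1 (dx 1 (\<xi> 1)) x u + dx 2 (dx 2 (\<xi> 1)) x u) = 0"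
  using G0[of x u "dv 1 1" "\<lambda>_ _. 0"] G0[of x u "\<lambda>_. 0" "\<lambda>_ _. 0"] e_uu[of x u]
  by (simp add: exps Zs) (simp add: algebra_simps; linarith)

lemma e_lin2: "- dx 3 (\<xi> 2) x u - a * u * dx 0 (\<xi> 2) x u
   + du (dx 2 \<phi>) x u + dx 2 (du \<phi>) x u
   - (dx 0 (dx 0 (\<xi> 2)) x u + dx 1 (dx 1 (\<xi> 2)) x u + dx 2 (dx 2 (\<xi> 2)) x u) = 0"
  using G0[of x u "dv 2 1" "\<lambda>_ _. 0"] G0[of x u "\<lambda>_. 0" "\<lambda>_ _. 0"] e_uu[of x u]
  by (simp add: exps Zs) (simp add: algebra_simps; linarith)

lemma sxok: "dxok i (\<xi> k)" by (rule smooth_dxok[OF sx])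
lemma inv_A: "invu (du \<phi>)" by (rule zero_invu[OF smooth_du[OF sp] e_uu])
lemma phi_lin: "\<phi> y u = \<phi> y 0 + u * du \<phi> y 0"
  by (rule lin_u[OF sp _ inv_A]) simp
lemma P1: "dx j \<phi> y u = dx j \<phi> y 0 + u * dx j (du \<phi>) y 0"
  by (rule linF[OF sp smooth_du[OF sp] phi_lin])
lemma P2: "du (dx j \<phi>) y u = dx j (du \<phi>) y 0"
  by (rule linF_u) (rule P1)
lemma P3: "dx i (dx j \<phi>) y u = dx i (dx j \<phi>) y 0 + u * dx i (dx j (du \<phi>)) y 0"
  by (rule linF[OF smooth_dx[OF sp] smooth_dx[OF smooth_du[OF sp]] P1])
lemma P4: "dx j (du \<phi>) y u = dx j (du \<phi>) y 0" by (rule invu_at0[OF invu_dx[OF inv_A]])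
lemma P5: "du \<phi> y u = du \<phi> y 0" by (rule invu_at0[OF inv_A])
lemma Xi0: "\<xi> k y u = \<xi> k y 0" "dx i (\<xi> k) y u = dx i (\<xi> k) y 0"
  "dx i (dx j (\<xi> k)) y u = dx i (dx j (\<xi> k)) y 0"
  by (rule invu_at0[OF inv_u] invu_at0[OF invu_dx[OF inv_u]] invu_at0[OF invu_dx[OF invu_dx[OF inv_u]]])+

lemma F4: "du \<phi> y 0 = - dx 3 (\<xi> 3) y 0 / 2"
proof -
  have d: "2 * (a * dx 0 (\<xi> 0) y 0) = a * dx 3 (\<xi> 3) y 0" using e_diag0[of y 0] by (metis mult.left_commute)
  have "2 * (a * du \<phi> y 0) + a * dx 3 (\<xi> 3) y 0 = 0"
    using e_lin0[where x=y and u=1] e_lin0[where x=y and u=0]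
    by (simp add: phi_lin[of y 1] P2 P4[where u=1] Xi0[where u=1]) (simp add: algebra_simps; insert d; linarith)
  then have "a * (2 * du \<phi> y 0 + dx 3 (\<xi> 3) y 0) = 0" by (simp add: algebra_simps)
  then show ?thesis using apos by simp
qed

lemma F5: "dx 0 (\<xi> 1) y 0 = 0" "dx 0 (\<xi> 2) y 0 = 0"
proof -
  have "a * dx 0 (\<xi> 1) y 0 = 0"
    using e_lin1[of y 1] e_lin1[of y 0]
    by (simp add: P2 P4[where u=1] Xi0[where u=1]) (simp add: algebra_simps; linarith)
  then show "dx 0 (\<xi> 1) y 0 = 0" using apos by simp
  have "a * dx 0 (\<xi> 2) y 0 = 0"
    using e_lin2[of y 1] e_lin2[of y 0]
    by (simp add: P2 P4[where u=1] Xi0[where u=1]) (simp add: algebra_simps; linarith)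
  then show "dx 0 (\<xi> 2) y 0 = 0" using apos by simp
qed

lemma F6: "a * \<phi> y 0 - dx 3 (\<xi> 0) y 0 + 2 * dx 0 (du \<phi>) y 0
   - (dx 0 (dx 0 (\<xi> 0)) y 0 + dx 1 (dx 1 (\<xi> 0)) y 0 + dx 2 (dx 2 (\<xi> 0)) y 0) = 0"
  using e_lin0[where x=y and u=0] by (simp add: P2)

lemma F7: "- dx 3 (\<xi> 1) y 0 + 2 * dx 1 (du \<phi>) y 0
   - (dx 0 (dx 0 (\<xi> 1)) y 0 + dx 1 (dx 1 (\<xi> 1)) y 0 + dx 2 (dx 2 (\<xi> 1)) y 0) = 0"
   "- dx 3 (\<xi> 2) y 0 + 2 * dx 2 (du \<phi>) y 0
   - (dx 0 (dx 0 (\<xi> 2)) y 0 + dx 1 (dx 1 (\<xi> 2)) y 0 + dx 2 (dx 2 (\<xi> 2)) y 0) = 0"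
  using e_lin1[of y 0] e_lin2[of y 0] by (simp_all add: P2)

lemma F8: "dx 3 (du \<phi>) y 0 + a * dx 0 \<phi> y 0 + dx 0 (dx 0 (du \<phi>)) y 0 + dx 1 (dx 1 (du \<phi>)) y 0
   + dx 2 (dx 2 (du \<phi>)) y 0 = 0"
  using e_const[of y 1] e_const[of y "-1"]
  by (simp add: P1[where u=1] P3[where u=1] P1[where u="-1"] P3[where u="-1"]) (simp add: algebra_simps; linarith)

lemma F9: "dx 3 \<phi> y 0 + dx 0 (dx 0 \<phi>) y 0 + dx 1 (dx 1 \<phi>) y 0 + dx 2 (dx 2 \<phi>) y 0 = 0"
  using e_const[of y 0] by simp

lemma phiok: "dxok i (\<lambda>y u. \<phi> y 0)" by (rule dxok0[OF smooth_dxok[OF sp]])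

lemma A_eq: "du \<phi> y u = - dx 3 (\<xi> 3) y u / 2"
  using F4[of y] P5[of y u] Xi0(2)[of 3 3 y u] by simp
lemma invx_T3: "invx 0 (dx 3 (\<xi> 3))" "invx 1 (dx 3 (\<xi> 3))" "invx 2 (dx 3 (\<xi> 3))"
  by (rule invx_dx[OF invx_T0] invx_dx[OF invx_T1] invx_dx[OF invx_T2])+
lemma invx_A: "invx 0 (du \<phi>)" "invx 1 (du \<phi>)" "invx 2 (du \<phi>)"
  by (rule invx_cong[where c="-1/2", OF _ invx_T3(1)] invx_cong[where c="-1/2", OF _ invx_T3(2)]
     invx_cong[where c="-1/2", OF _ invx_T3(3)]; simp add: A_eq)+

lemma X10: "dx 0 (\<xi> 1) y u = 0" using F5(1)[of y] Xi0(2)[of 0 1 y u] by simp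
lemma X20: "dx 0 (\<xi> 2) y u = 0" using F5(2)[of y] Xi0(2)[of 0 2 y u] by simp
lemma inv01: "invx 0 (\<xi> 1)" by (rule zero_invx[OF sxok X10])
lemma inv02: "invx 0 (\<xi> 2)" by (rule zero_invx[OF sxok X20])
lemma X01: "dx 1 (\<xi> 0) y u = 0" using s1_K01[of y u] X10[of y u] by simp
lemma X02: "dx 2 (\<xi> 0) y u = 0" using s1_K02[of y u] X20[of y u] by simp
lemma inv10: "invx 1 (\<xi> 0)" by (rule zero_invx[OF sxok X01])
lemma inv20: "invx 2 (\<xi> 0)" by (rule zero_invx[OF sxok X02])

definition GT where "GT = (\<lambda>y u. dx 3 (\<xi> 3) y u / 2)"
lemma invGT: "invx 0 GT" "invx 1 GT" "invx 2 GT"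
  by (rule invx_cong[where c="1/2", OF _ invx_T3(1)] invx_cong[where c="1/2", OF _ invx_T3(2)]
     invx_cong[where c="1/2", OF _ invx_T3(3)]; simp add: GT_def)+
lemma diag: "dx 0 (\<xi> 0) y u = GT y u" "dx 1 (\<xi> 1) y u = GT y u" "dx 2 (\<xi> 2) y u = GT y u"
  using e_diag0[of y u] e_diag1[of y u] e_diag2[of y u] by (simp_all add: GT_def)

lemma cr1: "invx 1 (dx 2 (\<xi> 1))" by (rule cross[OF sxok sxok diag(2) invGT(2) invGT(3)])
lemma cr2: "invx 2 (dx 1 (\<xi> 2))" by (rule cross[OF sxok sxok diag(3) invGT(3) invGT(2)])
lemma K12a: "dx 2 (\<xi> 1) y u = - dx 1 (\<xi> 2) y u" using s1_K12[of y u] by linarith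
lemma K12b: "dx 1 (\<xi> 2) y u = - dx 2 (\<xi> 1) y u" using s1_K12[of y u] by linarith
lemma inv2_d2X1: "invx 2 (dx 2 (\<xi> 1))"
  by (rule invx_cong[where c="-1", OF _ cr2]) (simp add: K12a)
lemma inv1_d1X2: "invx 1 (dx 1 (\<xi> 2))"
  by (rule invx_cong[where c="-1", OF _ cr1]) (simp add: K12b)
lemma inv_dd: "invx 1 (dx 1 (\<xi> 1))" "invx 2 (dx 2 (\<xi> 2))" "invx 0 (dx 0 (\<xi> 0))"
  by (rule invx_cong[where c=1, OF _ invGT(2)] invx_cong[where c=1, OF _ invGT(3)]
      invx_cong[where c=1, OF _ invGT(1)]; simp add: diag)+

lemma XX1: "dx 0 (dx 0 (\<xi> 1)) y u = 0" "dx 1 (dx 1 (\<xi> 1)) y u = 0" "dx 2 (dx 2 (\<xi> 1)) y u = 0"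
  by (rule invx_zero[OF invx_dx[OF inv01]] invx_zero[OF inv_dd(1)] invx_zero[OF inv2_d2X1])+
lemma XX2: "dx 0 (dx 0 (\<xi> 2)) y u = 0" "dx 1 (dx 1 (\<xi> 2)) y u = 0" "dx 2 (dx 2 (\<xi> 2)) y u = 0"
  by (rule invx_zero[OF invx_dx[OF inv02]] invx_zero[OF inv1_d1X2] invx_zero[OF inv_dd(2)])+
lemma dA: "dx 0 (du \<phi>) y u = 0" "dx 1 (du \<phi>) y u = 0" "dx 2 (du \<phi>) y u = 0"
  by (rule invx_zero[OF invx_A(1)] invx_zero[OF invx_A(2)] invx_zero[OF invx_A(3)])+

lemma X13: "dx 3 (\<xi> 1) y u = 0" using F7(1)[of y] XX1[of y 0] dA[of y 0] Xi0(2)[of 3 1 y u] by simp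
lemma X23: "dx 3 (\<xi> 2) y u = 0" using F7(2)[of y] XX2[of y 0] dA[of y 0] Xi0(2)[of 3 2 y u] by simp
lemma inv31: "invx 3 (\<xi> 1)" by (rule zero_invx[OF sxok X13])
lemma inv32: "invx 3 (\<xi> 2)" by (rule zero_invx[OF sxok X23])
lemma invG3: "invx 3 (dx 3 (\<xi> 3))"
  by (rule invx_cong[where c=2, OF _ invx_dx[OF inv31, of 1]]) (simp add: diag GT_def)

lemma T3c: "dx 3 (\<xi> 3) y u = dx 3 (\<xi> 3) 0 0"
proof (rule constF)
  fix i :: 4 show "invx i (dx 3 (\<xi> 3))" using k4[of i] invx_T3 invG3 by auto
qed (rule invu_dx[OF inv_u])

end

context zk begin
definition c1 where "c1 = dx 3 (\<xi> 3) 0 0"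
lemma GTc: "GT y u = c1 / 2" unfolding GT_def c1_def using T3c[of y u] by simp
lemma T3': "dx 3 (\<xi> 3) y u = c1" unfolding c1_def using T3c[of y u] by simp

lemma T_form: "\<xi> 3 y u = \<xi> 3 0 0 + c1 * y$3"
proof -
  have h: "\<And>i y u. dx i (\<xi> 3) y u = (\<lambda>i. if i = 3 then c1 else 0) i"
  proof -
    fix i :: 4 and y u show "dx i (\<xi> 3) y u = (\<lambda>i. if i = 3 then c1 else 0) i"
      using k4[of i] by (elim disjE) (simp_all add: s1_T0 s1_T1 s1_T2 T3')
  qed
  have "\<xi> 3 y u = \<xi> 3 0 0 + 0 * y$0 + 0 * y$1 + 0 * y$2 + c1 * y$3"
    using affine2[OF sxok h inv_u, where y=y and u=u] by simp
  then show ?thesis by simp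
qed

definition c3 where "c3 = dx 2 (\<xi> 1) 0 0"
lemma X12c: "dx 2 (\<xi> 1) y u = c3"
  unfolding c3_def
proof (rule constF)
  fix i :: 4 show "invx i (dx 2 (\<xi> 1))"
    using k4[of i] invx_dx[OF inv01] cr1 inv2_d2X1 invx_dx[OF inv31] by auto
qed (rule invu_dx[OF inv_u])

lemma X1_form: "\<xi> 1 y u = \<xi> 1 0 0 + c1 / 2 * y$1 + c3 * y$2"
proof -
  have h: "\<And>i y u. dx i (\<xi> 1) y u = (\<lambda>i. if i = 1 then c1/2 else if i = 2 then c3 else 0) i"
  proof -
    fix i :: 4 and y u show "dx i (\<xi> 1) y u = (\<lambda>i. if i = 1 then c1/2 else if i = 2 then c3 else 0) i"
      using k4[of i] by (elim disjE) (simp_all add: X10 diag(2) GTc X12c X13)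
  qed
  have "\<xi> 1 y u = \<xi> 1 0 0 + 0 * y$0 + c1/2 * y$1 + c3 * y$2 + 0 * y$3"
    using affine2[OF sxok h inv_u, where y=y and u=u] by simp
  then show ?thesis by simp
qed

lemma X2_form: "\<xi> 2 y u = \<xi> 2 0 0 - c3 * y$1 + c1 / 2 * y$2"
proof -
  have h: "\<And>i y u. dx i (\<xi> 2) y u = (\<lambda>i. if i = 1 then -c3 else if i = 2 then c1/2 else 0) i"
  proof -
    fix i :: 4 and y u show "dx i (\<xi> 2) y u = (\<lambda>i. if i = 1 then -c3 else if i = 2 then c1/2 else 0) i"
      using k4[of i] by (elim disjE) (simp_all add: X20 diag(3) GTc X12c K12b X23)
  qed
  have "\<xi> 2 y u = \<xi> 2 0 0 + 0 * y$0 + (-c3) * y$1 + c1/2 * y$2 + 0 * y$3"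
    using affine2[OF sxok h inv_u, where y=y and u=u] by simp
  then show ?thesis by simp
qed

lemma A_c: "du \<phi> y u = - c1 / 2" using A_eq[of y u] T3c[of y u] c1_def by simp
lemma A_fun: "du \<phi> = (\<lambda>_ _. - c1 / 2)" by (intro ext) (rule A_c)

lemma dx_cf: "dx i (\<lambda>_ _. c) = (\<lambda>_ _. 0)" by (simp add: dx_def fun_eq_iff)

lemma B0: "dx 0 \<phi> y 0 = 0"
proof -
  have "a * dx 0 \<phi> y 0 = 0" using F8[of y] by (simp add: A_fun dx_cf)
  then show ?thesis using apos by simp
qed

definition Bf where "Bf = (\<lambda>y (u::real). \<phi> y 0)"
lemma dBf: "dx j Bf y u = dx j \<phi> y 0" by (simp add: Bf_def dx_def)
lemma ddBf: "dx i (dx j Bf) y u = dx i (dx j \<phi>) y 0"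
  by (simp add: Bf_def dx_at0)
lemma Bfok: "dxok i Bf" unfolding Bf_def by (rule phiok)
lemma invB0: "invx 0 Bf" by (rule zero_invx[OF Bfok]) (simp add: dBf B0)

lemma X00c: "dx 0 (\<xi> 0) y u = c1 / 2" using diag(1) GTc by simp
lemma X0_3: "dx 3 (\<xi> 0) y u = a * Bf y u"
proof -
  have f: "dx 0 (\<xi> 0) = (\<lambda>_ _. c1 / 2)" by (intro ext) (rule X00c)
  have "dx 0 (dx 0 (\<xi> 0)) y 0 = 0" by (simp add: f dx_const)
  moreover have "dx 1 (dx 1 (\<xi> 0)) y 0 = 0" by (rule invx_zero[OF invx_dx[OF inv10]])
  moreover have "dx 2 (dx 2 (\<xi> 0)) y 0 = 0" by (rule invx_zero[OF invx_dx[OF inv20]])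
  ultimately have "dx 3 (\<xi> 0) y 0 = a * \<phi> y 0" using F6[of y] dA(1)[of y 0] by simp
  then show ?thesis using Xi0(2)[of 3 0 y u] by (simp add: Bf_def)
qed
lemma invB12: "invx 1 Bf" "invx 2 Bf"
  by (rule invx_cong[where c="1/a", OF _ invx_dx[OF inv10, of 3]], use apos in \<open>simp add: X0_3\<close>)
     (rule invx_cong[where c="1/a", OF _ invx_dx[OF inv20, of 3]], use apos in \<open>simp add: X0_3\<close>)
lemma invB3: "invx 3 Bf"
proof (rule zero_invx[OF Bfok])
  fix y u
  have "dx 0 (dx 0 \<phi>) y 0 = 0" using invx_zero[OF invx_dx[OF invB0], of 0 y 0] by (simp add: ddBf)
  moreover have "dx 1 (dx 1 \<phi>) y 0 = 0" using invx_zero[OF invx_dx[OF invB12(1)], of 1 y 0] by (simp add: ddBf)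
  moreover have "dx 2 (dx 2 \<phi>) y 0 = 0" using invx_zero[OF invx_dx[OF invB12(2)], of 2 y 0] by (simp add: ddBf)
  ultimately show "dx 3 Bf y u = 0" using F9[of y] by (simp add: dBf)
qed
lemma Bc: "\<phi> y 0 = \<phi> 0 0"
proof -
  have "Bf y 0 = Bf 0 0"
  proof (rule constF)
    fix i :: 4 show "invx i Bf" using k4[of i] invB0 invB12 invB3 by auto
  qed (simp add: invu_def Bf_def)
  then show ?thesis by (simp add: Bf_def)
qed

lemma X0_form: "\<xi> 0 y u = \<xi> 0 0 0 + c1 / 2 * y$0 + a * \<phi> 0 0 * y$3"
proof -
  have h: "\<And>i y u. dx i (\<xi> 0) y u = (\<lambda>i. if i = 0 then c1/2 else if i = 3 then a * \<phi> 0 0 else 0) i"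
  proof -
    fix i :: 4 and y u show "dx i (\<xi> 0) y u = (\<lambda>i. if i = 0 then c1/2 else if i = 3 then a * \<phi> 0 0 else 0) i"
      using k4[of i] by (elim disjE) (simp_all add: X00c X01 X02 X0_3 Bc[of y] Bf_def)
  qed
  have "\<xi> 0 y u = \<xi> 0 0 0 + c1/2 * y$0 + 0 * y$1 + 0 * y$2 + (a * \<phi> 0 0) * y$3"
    using affine2[OF sxok h inv_u, where y=y and u=u] by simp
  then show ?thesis by simp
qed

lemma phi_form: "\<phi> y u = \<phi> 0 0 - c1 / 2 * u"
  using phi_lin[of y u] Bc[of y] A_c[of y 0] by simp

lemma forward:
  "\<exists>c1 c2 c3 c4 c5 c6 c7 :: real. \<forall>x u.
        \<xi> 0 x u = c1 * x$0 / 2 + c5 * x$3 + c6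
      \<and> \<xi> 1 x u = c1 * x$1 / 2 + c3 * x$2 + c4
      \<and> \<xi> 2 x u = - c3 * x$1 + c1 * x$2 / 2 + c7
      \<and> \<xi> 3 x u = c1 * x$3 + c2
      \<and> \<phi> x u = - c1 * u / 2 + c5 / a"
proof (intro exI allI conjI)
  fix x u
  show "\<xi> 0 x u = c1 * x$0 / 2 + (a * \<phi> 0 0) * x$3 + \<xi> 0 0 0" using X0_form[of x u] by simp
  show "\<xi> 1 x u = c1 * x$1 / 2 + c3 * x$2 + \<xi> 1 0 0" using X1_form[of x u] by simp
  show "\<xi> 2 x u = - c3 * x$1 + c1 * x$2 / 2 + \<xi> 2 0 0" using X2_form[of x u] by simp
  show "\<xi> 3 x u = c1 * x$3 + \<xi> 3 0 0" using T_form[of x u] by simp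
  show "\<phi> x u = - c1 * u / 2 + (a * \<phi> 0 0) / a" using phi_form[of x u] apos by simp
qed

end


lemma k4': "(k::4) = 0 \<or> k = 1 \<or> k = 2 \<or> k = 3"
  using exhaust_4[of k] four0 by auto

lemma dxcf_g: "dx i (\<lambda>_ _. c) = (\<lambda>_ _. 0)" by (simp add: dx_def fun_eq_iff)
lemma du_cf: "du (\<lambda>_ _. c) = (\<lambda>_ _. 0)" by (simp add: du_def fun_eq_iff)

lemma aff_line: "(\<Sum>j\<in>UNIV. k j * (y + s *\<^sub>R ax i) $ j) = (\<Sum>j\<in>UNIV. k j * y $ j) + s * k i"
proof -
  have "(\<Sum>j\<in>UNIV. k j * (y + s *\<^sub>R ax i) $ j) = (\<Sum>j\<in>UNIV. k j * y $ j + (if j = i then s * k i else 0))"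
    by (intro sum.cong) (auto simp: axis_def algebra_simps)
  also have "\<dots> = (\<Sum>j\<in>UNIV. k j * y $ j) + s * k i"
    by (simp add: sum.distrib)
  finally show ?thesis .
qed

lemma aff_line2: "(\<Sum>j\<in>UNIV. k j * (y + s *\<^sub>R ax i) $ j) + m * v + c = ((\<Sum>j\<in>UNIV. k j * y $ j) + m * v + c) + s * k i"
  using aff_line[of k y s i] by simp

lemma dx_aff: "dx i (\<lambda>x u. (\<Sum>j\<in>UNIV. k j * x$j) + m * u + c) = (\<lambda>_ _. k i)"
proof (intro ext)
  fix y v
  have e: "(\<lambda>s. (\<Sum>j\<in>UNIV. k j * (y + s *\<^sub>R ax i) $ j) + m * v + c) = (\<lambda>s. ((\<Sum>j\<in>UNIV. k j * y $ j) + m * v + c) + s * k i)"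
    by (rule ext) (rule aff_line2)
  have "((\<lambda>s. ((\<Sum>j\<in>UNIV. k j * y $ j) + m * v + c) + s * k i) has_real_derivative k i) (at 0)"
    by (auto intro!: derivative_eq_intros)
  then show "dx i (\<lambda>x u. (\<Sum>j\<in>UNIV. k j * x$j) + m * u + c) y v = k i"
    unfolding dx_def e by (rule DERIV_imp_deriv)
qed

lemma du_aff: "du (\<lambda>x u. (\<Sum>j\<in>UNIV. k j * x$j) + m * u + c) = (\<lambda>_ _. m)"
proof (intro ext)
  fix y v
  have e: "(\<lambda>s. (\<Sum>j\<in>UNIV. k j * y $ j) + m * (v + s) + c) = (\<lambda>s. ((\<Sum>j\<in>UNIV. k j * y $ j) + m * v + c) + s * m)"
    by (rule ext) (simp add: algebra_simps)
  have "((\<lambda>s. ((\<Sum>j\<in>UNIV. k j * y $ j) + m * v + c) + s * m) has_real_derivative m) (at 0)"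
    by (auto intro!: derivative_eq_intros)
  then show "du (\<lambda>x u. (\<Sum>j\<in>UNIV. k j * x$j) + m * u + c) y v = m"
    unfolding du_def e by (rule DERIV_imp_deriv)
qed

lemma backward:
  fixes a :: real and \<xi> :: "4 \<Rightarrow> real^4 \<Rightarrow> real \<Rightarrow> real" and \<phi> :: "real^4 \<Rightarrow> real \<Rightarrow> real"
  assumes "a > 0"
   and H: "\<forall>x u.
        \<xi> 0 x u = c1 * x$0 / 2 + c5 * x$3 + c6
      \<and> \<xi> 1 x u = c1 * x$1 / 2 + c3 * x$2 + c4
      \<and> \<xi> 2 x u = - c3 * x$1 + c1 * x$2 / 2 + c7
      \<and> \<xi> 3 x u = c1 * x$3 + c2
      \<and> \<phi> x u = - c1 * u / 2 + c5 / a"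
  shows "is_zk_symmetry a \<xi> \<phi>"
proof -
  define K0 where "K0 = (\<lambda>j::4. if j = 0 then c1/2 else if j = 3 then c5 else 0)"
  define K1 where "K1 = (\<lambda>j::4. if j = 1 then c1/2 else if j = 2 then c3 else 0)"
  define K2 where "K2 = (\<lambda>j::4. if j = 1 then -c3 else if j = 2 then c1/2 else 0)"
  define K3 where "K3 = (\<lambda>j::4. if j = 3 then c1 else 0)"
  define K4 where "K4 = (\<lambda>j::4. 0::real)"
  have x0: "\<xi> 0 = (\<lambda>x u. (\<Sum>j\<in>UNIV. K0 j * x$j) + 0 * u + c6)"
    using H by (intro ext) (simp add: sum4 K0_def)
  have x1: "\<xi> 1 = (\<lambda>x u. (\<Sum>j\<in>UNIV. K1 j * x$j) + 0 * u + c4)"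
    using H by (intro ext) (simp add: sum4 K1_def)
  have x2: "\<xi> 2 = (\<lambda>x u. (\<Sum>j\<in>UNIV. K2 j * x$j) + 0 * u + c7)"
    using H by (intro ext) (simp add: sum4 K2_def)
  have x3: "\<xi> 3 = (\<lambda>x u. (\<Sum>j\<in>UNIV. K3 j * x$j) + 0 * u + c2)"
    using H by (intro ext) (simp add: sum4 K3_def)
  have p: "\<phi> = (\<lambda>x u. (\<Sum>j\<in>UNIV. K4 j * x$j) + (- c1 / 2) * u + c5 / a)"
    using H by (intro ext) (simp add: sum4 K4_def)
  define KK where "KK = (\<lambda>k::4. if k = 0 then K0 else if k = 1 then K1 else if k = 2 then K2 else K3)"
  define CC where "CC = (\<lambda>k::4. if k = 0 then c6 else if k = 1 then c4 else if k = 2 then c7 else c2)"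
  have xk: "\<xi> k = (\<lambda>x u. (\<Sum>j\<in>UNIV. KK k j * x$j) + 0 * u + CC k)" for k
    using k4'[of k] x0 x1 x2 x3 by (elim disjE) (simp_all add: KK_def CC_def)
  have dX: "dx i (\<xi> k) = (\<lambda>_ _. KK k i)" for i k
    by (subst xk) (rule dx_aff)
  have duX: "du (\<xi> k) = (\<lambda>_ _. 0)" for k
    by (subst xk) (rule du_aff)
  have dP: "dx i \<phi> = (\<lambda>_ _. K4 i)" for i
    by (subst p) (rule dx_aff)
  have duP: "du \<phi> = (\<lambda>_ _. - c1 / 2)"
    by (subst p) (rule du_aff)
  have pv: "\<phi> x u = - c1 * u / 2 + c5 / a" for x u using H by simp
  show ?thesis
    unfolding is_zk_symmetry_def
  proof (intro allI impI)
    fix x u u1 u2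
    assume sy: "\<forall>i j. u2 i j = (u2 j i :: real)" and d: "zk_delta a u u1 u2 = 0"
    have u3: "u1 3 = -(a * u * u1 0 + u2 0 0 + u2 1 1 + u2 2 2)" using d by (simp add: zk_delta_def)
    have s12: "u2 2 1 = u2 1 2" using sy by blast
    show "pr2_zk a \<xi> \<phi> x u u1 u2 = 0"
      unfolding pr2_zk_def phi1_def phi2_def TD1_def TD2_def
      apply (simp only: dX duX dP duP dxcf_g du_cf sum4)
      using assms(1) apply (simp add: KK_def K0_def K1_def K2_def K3_def K4_def u3 s12 pv)
      apply (simp add: algebra_simps)
      done
  qed
qed

theorem mainTheorem1:
  fixes a :: real and \<xi> :: "4 \<Rightarrow> real^4 \<Rightarrow> real \<Rightarrow> real" and \<phi> :: "real^4 \<Rightarrow> real \<Rightarrow> real"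
  assumes "a > 0"
    and "\<forall>i. smooth_coeff (\<xi> i)" and "smooth_coeff \<phi>"
  shows "is_zk_symmetry a \<xi> \<phi> \<longleftrightarrow>
    (\<exists>c1 c2 c3 c4 c5 c6 c7 :: real. \<forall>x u.
        \<xi> 0 x u = c1 * x$0 / 2 + c5 * x$3 + c6
      \<and> \<xi> 1 x u = c1 * x$1 / 2 + c3 * x$2 + c4
      \<and> \<xi> 2 x u = - c3 * x$1 + c1 * x$2 / 2 + c7
      \<and> \<xi> 3 x u = c1 * x$3 + c2
      \<and> \<phi> x u = - c1 * u / 2 + c5 / a)"
proof
  assume S: "is_zk_symmetry a \<xi> \<phi>"
  interpret zk a \<xi> \<phi> using assms S by unfold_locales auto
  show "\<exists>c1 c2 c3 c4 c5 c6 c7 :: real. \<forall>x u.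
        \<xi> 0 x u = c1 * x$0 / 2 + c5 * x$3 + c6
      \<and> \<xi> 1 x u = c1 * x$1 / 2 + c3 * x$2 + c4
      \<and> \<xi> 2 x u = - c3 * x$1 + c1 * x$2 / 2 + c7
      \<and> \<xi> 3 x u = c1 * x$3 + c2
      \<and> \<phi> x u = - c1 * u / 2 + c5 / a" by (rule forward)
next
  assume "\<exists>c1 c2 c3 c4 c5 c6 c7 :: real. \<forall>x u.
        \<xi> 0 x u = c1 * x$0 / 2 + c5 * x$3 + c6
      \<and> \<xi> 1 x u = c1 * x$1 / 2 + c3 * x$2 + c4
      \<and> \<xi> 2 x u = - c3 * x$1 + c1 * x$2 / 2 + c7
      \<and> \<xi> 3 x u = c1 * x$3 + c2
      \<and> \<phi> x u = - c1 * u / 2 + c5 / a"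
  then obtain c1 c2 c3 c4 c5 c6 c7 :: real where H: "\<forall>x u.
        \<xi> 0 x u = c1 * x$0 / 2 + c5 * x$3 + c6
      \<and> \<xi> 1 x u = c1 * x$1 / 2 + c3 * x$2 + c4
      \<and> \<xi> 2 x u = - c3 * x$1 + c1 * x$2 / 2 + c7
      \<and> \<xi> 3 x u = c1 * x$3 + c2
      \<and> \<phi> x u = - c1 * u / 2 + c5 / a" by blast
  show "is_zk_symmetry a \<xi> \<phi>" by (rule backward[OF assms(1) H])
qed

end
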